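(* Let $m>2$ and $\beta\in(0,1)$. (a) There exist $b>0$ and $\chi\in C^\infty((-\infty,b))$ with $\chi(s)=0$ for all $s\le0$ and $\chi(s)\to+\infty$ as $s\to b^-$, such that $$\frac{m-2}{m}\left(\frac{\chi''(s)}{\left[(1+\chi'(s))^m-(1+\chi'(s))\right]^{2/m}}\right)^{\frac{m}{m-2}}\le(\chi'(s))^\beta\quad\text{for all }s\in(0,b).$$ (b) There exists $\xi\in C^\infty(\mathbb{R})$ with $\xi(s)=s$ for all $s\le0$ and $\xi(s)$ increasing to some limit $M>0$ as $s\to+\infty$, such that $$\frac{m-2}{m}\left(\frac{-\xi''(s)}{\left[\xi'(s)-(\xi'(s))^m\right]^{2/m}}\right)^{\frac{m}{m-2}}\le(1-\xi'(s))^\beta\quad\text{for all }s\in(0,+\infty).$$ *)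

theory Defs
  imports "HOL-Analysis.Analysis"
begin

definition smooth_on :: "real set \<Rightarrow> (real \<Rightarrow> real) \<Rightarrow> bool" where
  "smooth_on S f \<longleftrightarrow> (\<forall>k. \<forall>x\<in>S. ((deriv ^^ k) f) differentiable (at x))"

end

theory Submission
  imports Defs "HOL-Computational_Algebra.Polynomial" "HOL-Real_Asymp.Real_Asymp"
begin

primrec Ck :: "nat \<Rightarrow> real set \<Rightarrow> (real \<Rightarrow> real) \<Rightarrow> bool" where
  "Ck 0 S f = True"
| "Ck (Suc k) S f = (\<exists>g. (\<forall>x\<in>S. (f has_real_derivative g x) (at x)) \<and> Ck k S g)"

lemma Ck_Suc_imp: "Ck (Suc k) S f \<Longrightarrow> Ck k S f"
proof (induction k arbitrary: f)
  case 0 then show ?case by simp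
next
  case (Suc k)
  then obtain g where "\<forall>x\<in>S. (f has_real_derivative g x) (at x)" "Ck (Suc k) S g" by auto
  with Suc.IH[of g] show ?case by auto
qed

lemma Ck_subset: "Ck k S f \<Longrightarrow> T \<subseteq> S \<Longrightarrow> Ck k T f"
proof (induction k arbitrary: f)
  case 0 then show ?case by simp
next
  case (Suc k)
  then obtain g where "\<forall>x\<in>S. (f has_real_derivative g x) (at x)" "Ck k S g" by auto
  with Suc show ?case by auto
qed

lemma Ck_const: "Ck k S (\<lambda>x. c)"
proof (induction k arbitrary: c)
  case 0 then show ?case by simp
next
  case (Suc k)
  have "\<forall>x\<in>S. ((\<lambda>x. c) has_real_derivative (\<lambda>x. 0) x) (at x)" by auto
  then show ?case using Suc[of 0] by (simp only: Ck.simps) (intro exI[of _ "\<lambda>x. 0"], simp)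
qed

lemma Ck_id: "Ck k S (\<lambda>x. x)"
proof (cases k)
  case 0 then show ?thesis by simp
next
  case (Suc j)
  have "\<forall>x\<in>S. ((\<lambda>x. x) has_real_derivative (\<lambda>x. 1) x) (at x)" by auto
  with Suc Ck_const show ?thesis by (simp only: Ck.simps) (intro exI[of _ "\<lambda>x. 1"], simp)
qed

lemma Ck_add: "Ck k S f \<Longrightarrow> Ck k S g \<Longrightarrow> Ck k S (\<lambda>x. f x + g x)"
proof (induction k arbitrary: f g)
  case 0 then show ?case by simp
next
  case (Suc k)
  then obtain f' g' where f': "\<forall>x\<in>S. (f has_real_derivative f' x) (at x)" "Ck k S f'"
    and g': "\<forall>x\<in>S. (g has_real_derivative g' x) (at x)" "Ck k S g'" by auto
  have "\<forall>x\<in>S. ((\<lambda>x. f x + g x) has_real_derivative (\<lambda>x. f' x + g' x) x) (at x)"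
    using f' g' by (auto intro: derivative_intros)
  with Suc.IH[OF f'(2) g'(2)] show ?case by auto
qed

lemma Ck_mult: "Ck k S f \<Longrightarrow> Ck k S g \<Longrightarrow> Ck k S (\<lambda>x. f x * g x)"
proof (induction k arbitrary: f g)
  case 0 then show ?case by simp
next
  case (Suc k)
  then obtain f' g' where f': "\<forall>x\<in>S. (f has_real_derivative f' x) (at x)" "Ck k S f'"
    and g': "\<forall>x\<in>S. (g has_real_derivative g' x) (at x)" "Ck k S g'" by auto
  have f: "Ck k S f" and g: "Ck k S g" using Suc.prems Ck_Suc_imp by blast+
  have "\<forall>x\<in>S. ((\<lambda>x. f x * g x) has_real_derivative (\<lambda>x. f' x * g x + f x * g' x) x) (at x)"
    using f' g' by (auto intro!: derivative_eq_intros)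
  moreover have "Ck k S (\<lambda>x. f' x * g x + f x * g' x)"
    using Suc.IH[OF f'(2) g] Suc.IH[OF f g'(2)] Ck_add by blast
  ultimately show ?case by auto
qed

lemma Ck_diff: "Ck k S f \<Longrightarrow> Ck k S g \<Longrightarrow> Ck k S (\<lambda>x. f x - g x)"
proof -
  assume "Ck k S f" "Ck k S g"
  then have "Ck k S (\<lambda>x. f x + (-1) * g x)" using Ck_add Ck_mult Ck_const by blast
  then show ?thesis by simp
qed

lemma Ck_compose: "Ck k T h \<Longrightarrow> Ck k S f \<Longrightarrow> f ` S \<subseteq> T \<Longrightarrow> Ck k S (\<lambda>x. h (f x))"
proof (induction k arbitrary: h f)
  case 0 then show ?case by simp
next
  case (Suc k)
  then obtain h' f' where h': "\<forall>x\<in>T. (h has_real_derivative h' x) (at x)" "Ck k T h'"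
    and f': "\<forall>x\<in>S. (f has_real_derivative f' x) (at x)" "Ck k S f'" by auto
  have f: "Ck k S f" using Suc.prems Ck_Suc_imp by blast
  have "\<forall>x\<in>S. ((\<lambda>x. h (f x)) has_real_derivative (\<lambda>x. h' (f x) * f' x) x) (at x)"
  proof
    fix x assume x: "x \<in> S"
    then have "f x \<in> T" using Suc.prems by auto
    then show "((\<lambda>x. h (f x)) has_real_derivative (\<lambda>x. h' (f x) * f' x) x) (at x)"
      using h'(1) f'(1) x DERIV_chain2 by blast
  qed
  moreover have "Ck k S (\<lambda>x. h' (f x) * f' x)"
    using Suc.IH[OF h'(2) f Suc.prems(3)] f'(2) Ck_mult by blast
  ultimately show ?case by auto
qed

lemma Ck_exp: "Ck k S exp"
proof (induction k)
  case 0 then show ?case by simp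
next
  case (Suc k)
  have "\<forall>x\<in>S. (exp has_real_derivative exp x) (at x)" by (auto intro: DERIV_exp)
  then show ?case using Suc by (simp only: Ck.simps) (intro exI[of _ exp], simp)
qed

lemma Ck_powr: "Ck k {0<..} (\<lambda>x. x powr a)"
proof (induction k arbitrary: a)
  case 0 then show ?case by simp
next
  case (Suc k)
  have "\<forall>x\<in>{0<..}. ((\<lambda>x. x powr a) has_real_derivative (\<lambda>x. a * x powr (a - 1)) x) (at x)"
    by (auto intro!: derivative_eq_intros)
  moreover have "Ck k {0<..} (\<lambda>x. a * x powr (a - 1))" using Suc.IH Ck_mult Ck_const by blast
  ultimately show ?case by auto
qed

lemma Ck_cong: "open S \<Longrightarrow> (\<forall>x\<in>S. f x = g x) \<Longrightarrow> Ck k S f \<Longrightarrow> Ck k S g"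
proof (cases k)
  case 0 then show ?thesis by simp
next
  case (Suc j)
  assume S: "open S" "\<forall>x\<in>S. f x = g x" "Ck k S f"
  then obtain f' where f': "\<forall>x\<in>S. (f has_real_derivative f' x) (at x)" "Ck j S f'" using Suc by auto
  have "\<forall>x\<in>S. (g has_real_derivative f' x) (at x)"
    using f'(1) S(1,2) has_field_derivative_transform_within_open by blast
  with f' Suc show ?thesis by auto
qed

lemma Ck_deriv: "open S \<Longrightarrow> (\<forall>k. Ck k S f) \<Longrightarrow> Ck k S (deriv f)"
proof -
  assume S: "open S" and all: "\<forall>k. Ck k S f"
  have "Ck (Suc k) S f" using all by blast
  then obtain g where g: "\<forall>x\<in>S. (f has_real_derivative g x) (at x)" "Ck k S g"
    by (simp only: Ck.simps) blast
  have "\<forall>x\<in>S. g x = deriv f x" using g(1) DERIV_imp_deriv by metis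
  then show ?thesis using Ck_cong[OF S _ g(2)] by blast
qed

lemma smooth_from_Ck:
  assumes S: "open S" and all: "\<forall>k. Ck k S f"
  shows "smooth_on S f"
proof -
  have "\<forall>j. Ck j S ((deriv ^^ k) f)" for k
  proof (induction k)
    case 0 then show ?case using all by simp
  next
    case (Suc k) then show ?case using Ck_deriv[OF S] by simp
  qed
  then have "Ck (Suc 0) S ((deriv ^^ k) f)" for k by blast
  then show ?thesis unfolding smooth_on_def
    by (auto simp: real_differentiable_def)
qed


definition fl :: "real poly \<Rightarrow> real \<Rightarrow> real" where
  "fl p s = (if s > 0 then poly p (1/s) * exp (-1/s) else 0)"

definition flq :: "real poly \<Rightarrow> real poly" where
  "flq p = [:0,0,1:] * (p - pderiv p)"

lemma poly_exp_at_top: fixes r :: "real poly" shows "((\<lambda>x. poly r x * exp (-x)) \<longlongrightarrow> 0) at_top"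
proof -
  have eq: "poly r x * exp (-x) = (\<Sum>i\<le>degree r. coeff r i * (x ^ i / exp x))" for x
    by (simp add: poly_altdef exp_minus divide_inverse sum_distrib_right mult.assoc)
  have "((\<lambda>x. \<Sum>i\<le>degree r. coeff r i * (x ^ i / exp x)) \<longlongrightarrow> (\<Sum>i\<le>degree r. coeff r i * 0)) at_top"
    by (intro tendsto_sum tendsto_mult tendsto_const tendsto_power_div_exp_0)
  then show ?thesis by (simp add: eq)
qed

lemma poly_exp_at_right0: fixes r :: "real poly" shows "((\<lambda>y. poly r (1/y) * exp (-1/y)) \<longlongrightarrow> 0) (at_right 0)"
proof -
  have "((\<lambda>y. poly r (inverse y) * exp (- inverse y)) \<longlongrightarrow> 0) (at_right 0)"
    using filterlim_compose[OF poly_exp_at_top filterlim_inverse_at_top_right] by (simp add: o_def)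
  then show ?thesis by (simp add: divide_inverse minus_divide_left)
qed

lemma fl_deriv: "(fl p has_real_derivative fl (flq p) x) (at x)"
proof (cases "x > 0")
  case True
  have d: "((\<lambda>s. poly p (1/s) * exp (-1/s)) has_real_derivative
      poly (pderiv p) (1/x) * (- 1 / x^2) * exp (-1/x) + poly p (1/x) * (exp (-1/x) * (1/x^2))) (at x)"
    using True
    by (auto intro!: derivative_eq_intros simp: power2_eq_square field_simps)
  have e: "poly (pderiv p) (1/x) * (- 1 / x^2) * exp (-1/x) + poly p (1/x) * (exp (-1/x) * (1/x^2))
       = fl (flq p) x"
    using True by (simp add: fl_def flq_def poly_pCons algebra_simps power2_eq_square)
  show ?thesis
    apply (rule has_field_derivative_transform_within_open[of _ _ _ "{0<..}"])
    using d e True by (auto simp: fl_def)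
next
  case False
  show ?thesis
  proof (cases "x < 0")
    case True
    have "((\<lambda>s. 0) has_real_derivative 0) (at x)" by simp
    then have "(fl p has_real_derivative 0) (at x)"
      apply (rule has_field_derivative_transform_within_open[of _ _ _ "{..<0}"])
      using True by (auto simp: fl_def)
    then show ?thesis using True by (simp add: fl_def)
  next
    case False
    then have x0: "x = 0" using \<open>\<not> x > 0\<close> by simp
    have l: "((\<lambda>y. (fl p y - fl p 0) / (y - 0)) \<longlongrightarrow> 0) (at_left 0)"
    proof (rule tendsto_eventually)
      show "\<forall>\<^sub>F y in at_left 0. (fl p y - fl p 0) / (y - 0) = (0::real)"
        using eventually_at_left_real[of "-1" 0] by (rule eventually_mono) (auto simp: fl_def)
    qed
    have r: "((\<lambda>y. (fl p y - fl p 0) / (y - 0)) \<longlongrightarrow> 0) (at_right 0)"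
    proof -
      have "((\<lambda>y. poly ([:0,1:] * p) (1/y) * exp (-1/y)) \<longlongrightarrow> 0) (at_right 0)"
        by (rule poly_exp_at_right0)
      then show ?thesis
        apply (rule tendsto_cong[THEN iffD1, rotated])
        using eventually_at_right_real[of 0 1] by (rule eventually_mono) (auto simp: fl_def)
    qed
    have "fl (flq p) 0 = 0" by (simp add: fl_def)
    then show ?thesis using x0 l r
      by (simp add: has_field_derivative_iff filterlim_at_split)
  qed
qed

lemma Ck_fl: "Ck k S (fl p)"
proof (induction k arbitrary: p)
  case 0 then show ?case by simp
next
  case (Suc k)
  show ?case using fl_deriv Suc.IH[of "flq p"] by (simp only: Ck.simps) blast
qed


lemma cube_exp:
  fixes x e :: real
  assumes "0 \<le> x" "0 < e"
  shows "x^3 * exp (-e*x) \<le> 27 / e^3"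
proof -
  have "e*x/3 \<le> exp (e*x/3)" using exp_ge_add_one_self[of "e*x/3"] by linarith
  then have "(e*x/3)^3 \<le> exp (e*x/3)^3" using assms by (intro power_mono) auto
  also have "exp (e*x/3)^3 = exp (e*x)" by (simp add: exp_of_nat_mult[symmetric])
  finally have "e^3 * x^3 \<le> 27 * exp (e*x)" by (simp add: power_divide power_mult_distrib)
  then have "x^3 \<le> 27 / e^3 * exp (e*x)" using assms by (simp add: field_simps)
  then have "x^3 * exp (-e*x) \<le> 27 / e^3 * exp (e*x) * exp (-e*x)"
    by (intro mult_right_mono) auto
  also have "\<dots> = 27 / e^3" by (simp add: mult.assoc exp_add[symmetric])
  finally show ?thesis .
qed

lemma final_step:
  fixes m Y Z \<beta> :: real
  assumes m: "m > 2" and Y: "0 \<le> Y" and Z: "0 \<le> Z" and YZ: "Y \<le> Z powr (\<beta> * (1 - 2/m))"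
  shows "(m - 2) / m * Y powr (m / (m - 2)) \<le> Z powr \<beta>"
proof -
  have r: "0 \<le> m / (m - 2)" using m by simp
  have "Y powr (m / (m - 2)) \<le> (Z powr (\<beta> * (1 - 2/m))) powr (m / (m - 2))"
    using powr_mono2[OF r Y YZ] .
  also have "\<dots> = Z powr \<beta>"
  proof -
    have "\<beta> * (1 - 2/m) * (m / (m - 2)) = \<beta>" using m by (simp add: field_simps)
    then show ?thesis by (simp add: powr_powr)
  qed
  finally have 1: "Y powr (m / (m - 2)) \<le> Z powr \<beta>" .
  have "(m - 2) / m \<le> 1" "0 \<le> (m - 2) / m" using m by auto
  then have "(m - 2) / m * Y powr (m / (m - 2)) \<le> 1 * Y powr (m / (m - 2))"
    by (intro mult_right_mono) auto
  with 1 show ?thesis by simp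
qed

lemma A_red:
  fixes m \<beta> c X :: real
  assumes m: "m > 2" and c: "c > 0" and X: "0 \<le> X"
    and XB: "X \<le> c powr (2/m + \<beta> * (1 - 2/m)) * (1 + c)"
  shows "(m - 2) / m * (X / ((1 + c) powr m - (1 + c)) powr (2 / m)) powr (m / (m - 2))
         \<le> c powr \<beta>"
proof -
  define p where "p = 2/m"
  have p: "0 < p" "p < 1" using m by (auto simp: p_def)
  define D where "D = (1 + c) powr m - (1 + c)"
  have c1: "1 \<le> 1 + c" using c by simp
  have pm: "(1 + c) powr m = (1 + c) * (1 + c) powr (m - 1)"
    using c by (simp add: powr_add[symmetric] powr_mult_base)
  have "(1 + c) powr 1 \<le> (1 + c) powr (m - 1)" using m c1 by (intro powr_mono) auto
  then have ge1: "1 + c \<le> (1 + c) powr (m - 1)" using c by simp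
  have Dge: "c * (1 + c) powr (m - 1) \<le> D" unfolding D_def pm using ge1 by (simp add: algebra_simps)
  have pos1: "0 < c * (1 + c) powr (m - 1)" using c by simp
  have "(c * (1 + c) powr (m - 1)) powr p \<le> D powr p"
    using Dge pos1 p by (intro powr_mono2) auto
  moreover have "(c * (1 + c) powr (m - 1)) powr p = c powr p * (1 + c) powr ((m - 1) * p)"
    using c by (simp add: powr_mult powr_powr)
  moreover have "(m - 1) * p = 2 - p" using m by (simp add: p_def field_simps)
  moreover have "(1 + c) powr 1 \<le> (1 + c) powr (2 - p)" using p c1 by (intro powr_mono) auto
  ultimately have Dp: "c powr p * (1 + c) \<le> D powr p" using c
    by (smt (verit, best) mult_left_mono powr_ge_zero powr_one_gt_zero_iff)
  have Dp0: "0 < c powr p * (1 + c)" using c by simp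
  define Y where "Y = X / D powr p"
  have Y0: "0 \<le> Y" using X Dp Dp0 by (simp add: Y_def)
  have "Y \<le> X / (c powr p * (1 + c))" unfolding Y_def
    using Dp Dp0 X less_le_trans[OF Dp0 Dp] by (intro divide_left_mono) auto
  also have "\<dots> \<le> c powr (p + \<beta> * (1 - 2/m)) * (1 + c) / (c powr p * (1 + c))"
    using XB Dp0 by (intro divide_right_mono) (auto simp: p_def)
  also have "\<dots> = c powr (\<beta> * (1 - 2/m))" using c by (simp add: powr_add)
  finally have "Y \<le> c powr (\<beta> * (1 - 2/m))" .
  from final_step[OF m Y0 _ this] c show ?thesis by (simp add: Y_def D_def p_def)
qed

lemma B_red:
  fixes m \<beta> d X :: real
  assumes m: "m > 2" and d: "0 < d" "d < 1" and X: "0 \<le> X"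
    and XB: "X \<le> d * (1 - d) powr (2/m + \<beta> * (1 - 2/m))"
  shows "(m - 2) / m * (X / (d - d powr m) powr (2 / m)) powr (m / (m - 2))
         \<le> (1 - d) powr \<beta>"
proof -
  define p where "p = 2/m"
  have p: "0 < p" "p < 1" using m by (auto simp: p_def)
  define D where "D = d - d powr m"
  have "d powr m \<le> d powr 2" using m d by (intro powr_mono') auto
  then have "d powr m \<le> d * d" using d by (simp add: power2_eq_square)
  then have Dge: "d * (1 - d) \<le> D" unfolding D_def by (simp add: algebra_simps)
  have pos1: "0 < d * (1 - d)" using d by simp
  have "(d * (1 - d)) powr p \<le> D powr p"
    using Dge pos1 p by (intro powr_mono2) auto
  moreover have "(d * (1 - d)) powr p = d powr p * (1 - d) powr p"
    using d by (simp add: powr_mult)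
  moreover have "d powr 1 \<le> d powr p" using p d by (intro powr_mono') auto
  ultimately have Dp: "d * (1 - d) powr p \<le> D powr p" using d
    by (smt (verit, best) mult_right_mono powr_ge_zero powr_one_gt_zero_iff)
  have Dp0: "0 < d * (1 - d) powr p" using d by simp
  define Y where "Y = X / D powr p"
  have Y0: "0 \<le> Y" using X Dp Dp0 by (simp add: Y_def)
  have "Y \<le> X / (d * (1 - d) powr p)" unfolding Y_def
    using Dp Dp0 X less_le_trans[OF Dp0 Dp] by (intro divide_left_mono) auto
  also have "\<dots> \<le> d * (1 - d) powr (p + \<beta> * (1 - 2/m)) / (d * (1 - d) powr p)"
    using XB Dp0 by (intro divide_right_mono) (auto simp: p_def)
  also have "\<dots> = (1 - d) powr (\<beta> * (1 - 2/m))" using d by (simp add: powr_add)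
  finally have "Y \<le> (1 - d) powr (\<beta> * (1 - 2/m))" .
  from final_step[OF m Y0 _ this] d show ?thesis by (simp add: Y_def D_def p_def)
qed


lemma d_lower_small:
  fixes x :: real assumes "0 < x" "x < 1"
  shows "x^2 / 6 \<le> 1 - exp (-x) * (1 + x)"
proof -
  have q: "1 + x + x^2/2 \<le> exp x" using exp_lower_Taylor_quadratic[of x] assms by simp
  have e3: "exp x \<le> 3" using exp_le exp_le_cancel_iff[of x 1] assms by linarith
  have "exp (-x) * (1 + x) = (1 + x) / exp x" by (simp add: exp_minus field_simps)
  moreover have "x^2/6 \<le> 1 - (1 + x) / exp x"
  proof -
    have "x^2/6 * exp x \<le> x^2/6 * 3" using e3 by (intro mult_left_mono) auto
    also have "\<dots> \<le> exp x - (1 + x)" using q by simp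
    finally have "x^2/6 * exp x \<le> exp x - (1 + x)" .
    then show ?thesis by (simp add: field_simps)
  qed
  ultimately show ?thesis by simp
qed

lemma d_lower_big:
  fixes x :: real assumes "1 \<le> x"
  shows "1/5 \<le> 1 - exp (-x) * (1 + x)"
proof -
  have q: "1 + x + x^2/2 \<le> exp x" using exp_lower_Taylor_quadratic[of x] assms by simp
  have "0 \<le> (2*x+1)*(x-1)" using assms by (intro mult_nonneg_nonneg) auto
  then have "5 * (1 + x) \<le> 4 * (1 + x + x^2/2)"
    by (simp add: algebra_simps power2_eq_square)
  then have "5 * (1 + x) \<le> 4 * exp x" using q by (smt (verit))
  then have "(1 + x) / exp x \<le> 4/5" by (simp add: pos_divide_le_eq)
  moreover have "exp (-x) * (1 + x) = (1 + x) / exp x" by (simp add: exp_minus field_simps)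
  ultimately show ?thesis by simp
qed

lemma Fd_bounds:
  fixes x :: real assumes "0 < x"
  shows "0 < exp (-x) * (1 + x)" "exp (-x) * (1 + x) < 1"
proof -
  show "0 < exp (-x) * (1 + x)" using assms by simp
  have "1 + x + x^2/2 \<le> exp x" using exp_lower_Taylor_quadratic[of x] assms by simp
  moreover have "0 < x^2/2" using assms by simp
  ultimately have "1 + x < exp x" by linarith
  then show "exp (-x) * (1 + x) < 1" by (simp add: exp_minus field_simps)
qed

lemma powr_exp_lower:
  fixes x q :: real assumes "0 < x" "0 \<le> q"
  shows "exp (-(q*x)) \<le> (exp (-x) * (1 + x)) powr q"
proof -
  have "exp (-x) powr q \<le> (exp (-x) * (1 + x)) powr q"
    using assms by (intro powr_mono2) auto
  moreover have "exp (-x) powr q = exp (-(q*x))" by (simp add: powr_def)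
  ultimately show ?thesis by simp
qed

lemma B_core:
  fixes x e :: real
  assumes x: "0 < x" and e: "0 < e" "e < 1"
  shows "exp (-x) * x^3 \<le> 135 / e^3 * (1 - exp (-x) * (1 + x)) * (exp (-x) * (1 + x)) powr (1 - e)"
proof -
  define d where "d = 1 - exp (-x) * (1 + x)"
  have d0: "0 < d" using Fd_bounds[OF x] by (simp add: d_def)
  have key: "x^3 * exp (-e*x) \<le> 135 / e^3 * d"
  proof (cases "x < 1")
    case True
    have "x^3 * exp (-e*x) \<le> x^3 * 1" using x e by (intro mult_left_mono) auto
    also have "\<dots> \<le> x^2" using x True by (simp add: power3_eq_cube power2_eq_square mult_left_le_one_le)
    also have "\<dots> \<le> 6 * d" using d_lower_small[OF x True] by (simp add: d_def)
    also have "6 \<le> 135 / e^3"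
    proof -
      have "e^3 \<le> 1" using e by (simp add: power_le_one)
      then have "6 * e^3 \<le> 135" by simp
      then show ?thesis using e by (simp add: field_simps)
    qed
    then have "6 * d \<le> 135 / e^3 * d" using d0 by (intro mult_right_mono) auto
    finally show ?thesis .
  next
    case False
    have "x^3 * exp (-e*x) \<le> 27 / e^3" using cube_exp[of x e] x e by simp
    also have "\<dots> = 135 / e^3 * (1/5)" by simp
    also have "\<dots> \<le> 135 / e^3 * d" using d_lower_big[of x] False e by (intro mult_left_mono) (auto simp: d_def)
    finally show ?thesis .
  qed
  have "exp (-x) * x^3 = x^3 * exp (-e*x) * exp (-((1 - e) * x))"
    by (simp add: exp_add[symmetric] algebra_simps)
  also have "\<dots> \<le> 135 / e^3 * d * exp (-((1 - e) * x))"
    using key by (intro mult_right_mono) auto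
  also have "\<dots> \<le> 135 / e^3 * d * (exp (-x) * (1 + x)) powr (1 - e)"
    using powr_exp_lower[of x "1 - e"] x e d0 by (intro mult_left_mono) auto
  finally show ?thesis by (simp add: d_def)
qed


definition FF :: "real \<Rightarrow> real" where "FF s = s * fl 1 s"
definition Fd :: "real \<Rightarrow> real" where "Fd s = (if s > 0 then exp (-1/s) * (1 + 1/s) else 0)"
definition F2 :: "real \<Rightarrow> real" where "F2 s = exp (-1/s) / s^3"

lemma FF_pos: "s > 0 \<Longrightarrow> FF s = s * exp (-1/s)"
  by (simp add: FF_def fl_def)

lemma FF_nonpos: "s \<le> 0 \<Longrightarrow> FF s = 0"
  by (simp add: FF_def fl_def)

lemma FF_deriv: "(FF has_real_derivative Fd s) (at s)"
proof -
  have "(FF has_real_derivative (s * fl (flq 1) s + 1 * fl 1 s)) (at s)"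
    unfolding FF_def[abs_def] by (rule DERIV_mult'[OF DERIV_ident fl_deriv])
  moreover have "s * fl (flq 1) s + 1 * fl 1 s = Fd s"
    by (simp add: fl_def flq_def Fd_def power2_eq_square field_simps)
  ultimately show ?thesis by simp
qed

lemma Fd_deriv: "s > 0 \<Longrightarrow> (Fd has_real_derivative F2 s) (at s)"
proof -
  assume s: "s > 0"
  have "((\<lambda>s. exp (-1/s) * (1 + 1/s)) has_real_derivative
     exp (-1/s) * (1/s^2) * (1 + 1/s) + exp (-1/s) * (- 1/s^2)) (at s)"
    using s by (auto intro!: derivative_eq_intros simp: power2_eq_square field_simps)
  moreover have "exp (-1/s) * (1/s^2) * (1 + 1/s) + exp (-1/s) * (- 1/s^2) = F2 s"
    using s by (simp add: F2_def power2_eq_square power3_eq_cube field_simps)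
  ultimately have "((\<lambda>s. exp (-1/s) * (1 + 1/s)) has_real_derivative F2 s) (at s)" by simp
  then show ?thesis
    by (rule has_field_derivative_transform_within_open[of _ _ _ "{0<..}"]) (use s in \<open>auto simp: Fd_def\<close>)
qed

lemma Ck_FF: "Ck k S FF"
proof -
  have "Ck k S (\<lambda>s. s * fl 1 s)" by (intro Ck_mult Ck_id Ck_fl)
  then show ?thesis by (simp add: FF_def[abs_def])
qed

lemma deriv2_open:
  assumes S: "open S" "x \<in> S"
    and d1: "\<And>y. y \<in> S \<Longrightarrow> (f has_real_derivative f1 y) (at y)"
    and d2: "(f1 has_real_derivative f2) (at x)"
  shows "deriv f x = f1 x" "deriv (deriv f) x = f2"
proof -
  show "deriv f x = f1 x" using d1[OF S(2)] DERIV_imp_deriv by blast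
  have "\<And>y. y \<in> S \<Longrightarrow> f1 y = deriv f y" using d1 DERIV_imp_deriv by metis
  then have "(deriv f has_real_derivative f2) (at x)"
    using has_field_derivative_transform_within_open[OF d2 S] by blast
  then show "deriv (deriv f) x = f2" using DERIV_imp_deriv by blast
qed

lemma partB:
  fixes m \<beta> :: real
  assumes m: "m > 2" and b: "0 < \<beta>" "\<beta> < 1"
  shows "\<exists>(xi :: real \<Rightarrow> real) (M::real).
            smooth_on UNIV xi \<and>
            (\<forall>s\<le>0. xi s = s) \<and>
            mono xi \<and> M > 0 \<and> (xi \<longlongrightarrow> M) at_top \<and>
            (\<forall>s>0.
               0 < deriv xi s \<and> deriv xi s < 1 \<and> deriv (deriv xi) s \<le> 0 \<and>
               (m - 2) / m *
                 (- deriv (deriv xi) s /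
                   (deriv xi s - (deriv xi s) powr m) powr (2 / m))
                 powr (m / (m - 2))
               \<le> (1 - deriv xi s) powr \<beta>)"
proof -
  define e where "e = (1 - \<beta>) * (1 - 2/m)"
  have m1: "0 < 1 - 2/m" "1 - 2/m < 1" using m by (auto simp: field_simps)
  have e0: "0 < e" using m1 b unfolding e_def by (auto intro!: mult_pos_pos)
  have "e \<le> (1 - \<beta>) * 1" unfolding e_def using m1 b by (intro mult_left_mono) auto
  then have e: "0 < e" "e < 1" using e0 b by auto
  have q: "1 - e = 2/m + \<beta> * (1 - 2/m)" using m by (simp add: e_def field_simps)
  define L where "L = 135 / e^3"
  have L: "L > 0" using e by (simp add: L_def)
  define xi where "xi = (\<lambda>s. s - L * FF (s / L))"
  have xi_d: "(xi has_real_derivative (1 - Fd (s / L))) (at s)" for s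
  proof -
    have c: "((\<lambda>x. FF (x / L)) has_real_derivative Fd (s / L) * (1 / L)) (at s)"
      by (rule DERIV_chain2[OF FF_deriv]) (use L in \<open>auto intro!: derivative_eq_intros\<close>)
    have "(xi has_real_derivative (1 - L * (Fd (s / L) * (1 / L)))) (at s)"
      unfolding xi_def
      by (intro derivative_intros DERIV_cmult c)
    then show ?thesis using L by simp
  qed
  have xi_d2: "((\<lambda>s. 1 - Fd (s / L)) has_real_derivative (- (F2 (s / L) / L))) (at s)" if s: "s > 0" for s
  proof -
    have c: "((\<lambda>x. Fd (x / L)) has_real_derivative F2 (s / L) * (1 / L)) (at s)"
      by (rule DERIV_chain2[OF Fd_deriv]) (use s L in \<open>auto intro!: derivative_eq_intros\<close>)
    have "((\<lambda>s. 1 - Fd (s / L)) has_real_derivative (0 - F2 (s / L) * (1 / L))) (at s)"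
      by (intro derivative_intros DERIV_cmult c)
    then show ?thesis by simp
  qed
  have smooth: "smooth_on UNIV xi"
  proof (rule smooth_from_Ck)
    show "\<forall>k. Ck k UNIV xi"
    proof
      fix k
      have "Ck k UNIV (\<lambda>s. s * (1 / L))" by (intro Ck_mult Ck_id Ck_const)
      then have "Ck k UNIV (\<lambda>s. s / L)" by simp
      then have "Ck k UNIV (\<lambda>s. FF (s / L))" by (intro Ck_compose[OF Ck_FF]) auto
      then have "Ck k UNIV (\<lambda>s. s - L * FF (s / L))" by (intro Ck_diff Ck_id Ck_mult Ck_const)
      then show "Ck k UNIV xi" by (simp add: xi_def)
    qed
  qed simp
  have neg: "\<forall>s\<le>0. xi s = s" using L by (auto simp: xi_def FF_nonpos divide_nonpos_pos)
  have Fd_le1: "Fd y \<le> 1" for y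
  proof (cases "y > 0")
    case True
    then show ?thesis using Fd_bounds(2)[of "1/y"] by (simp add: Fd_def)
  qed (simp add: Fd_def)
  have mono: "mono xi"
  proof (rule monoI)
    fix a c :: real assume "a \<le> c"
    then show "xi a \<le> xi c"
      by (rule DERIV_nonneg_imp_nondecreasing) (use xi_d Fd_le1 in \<open>force\<close>)
  qed
  have lim: "(xi \<longlongrightarrow> L) at_top"
  proof -
    have "((\<lambda>s. s - s * exp (- L / s)) \<longlongrightarrow> L) at_top" using L by real_asymp
    moreover have "\<forall>\<^sub>F s in at_top. s - s * exp (- L / s) = xi s"
      using eventually_gt_at_top[of 0]
      by (rule eventually_mono) (use L in \<open>auto simp: xi_def FF_pos field_simps\<close>)
    ultimately show ?thesis by (rule tendsto_cong[THEN iffD1, rotated])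
  qed
  have main: "0 < deriv xi s \<and> deriv xi s < 1 \<and> deriv (deriv xi) s \<le> 0 \<and>
               (m - 2) / m *
                 (- deriv (deriv xi) s /
                   (deriv xi s - (deriv xi s) powr m) powr (2 / m))
                 powr (m / (m - 2))
               \<le> (1 - deriv xi s) powr \<beta>" if s: "s > 0" for s
  proof -
    have dd: "deriv xi s = 1 - Fd (s / L)" "deriv (deriv xi) s = - (F2 (s / L) / L)"
      using deriv2_open[of UNIV s xi "\<lambda>s. 1 - Fd (s / L)", OF _ _ xi_d xi_d2[OF s]] by auto
    define x where "x = L / s"
    have x: "x > 0" using L s by (simp add: x_def)
    have Fdx: "Fd (s / L) = exp (-x) * (1 + x)" using s L by (simp add: Fd_def x_def)
    have F2x: "F2 (s / L) = exp (-x) * x^3" using s L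
      by (simp add: F2_def x_def power_divide field_simps)
    have b1: "0 < exp (-x) * (1 + x)" "exp (-x) * (1 + x) < 1" using Fd_bounds[OF x] by auto
    have F20: "0 \<le> F2 (s / L) / L" using F2x L x by simp
    have core: "F2 (s / L) / L \<le> (1 - Fd (s / L)) * (1 - (1 - Fd (s / L))) powr (2/m + \<beta> * (1 - 2/m))"
    proof -
      have "exp (-x) * x^3 \<le> L * (1 - exp (-x) * (1 + x)) * (exp (-x) * (1 + x)) powr (1 - e)"
        using B_core[OF x e] by (simp add: L_def)
      then show ?thesis using L by (simp add: F2x Fdx q[symmetric] pos_divide_le_eq mult.commute mult.left_commute)
    qed
    have red: "(m - 2) / m * (F2 (s / L) / L / ((1 - Fd (s / L)) - (1 - Fd (s / L)) powr m) powr (2 / m))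
        powr (m / (m - 2)) \<le> (1 - (1 - Fd (s / L))) powr \<beta>"
      by (rule B_red[OF m _ _ F20 core]) (use b1 Fdx in auto)
    show ?thesis using red b1 Fdx F20 by (simp add: dd)
  qed
  show ?thesis
    by (rule exI[of _ xi], rule exI[of _ L]) (use smooth neg mono L lim main in auto)
qed


lemma powr_add_eq: "b + c = d \<Longrightarrow> (x::real) powr b * x powr c = x powr d"
  by (simp add: powr_add[symmetric])

lemma A_core:
  fixes a q B u \<eta> G :: real
  assumes a: "a > 0" and q: "q > 0" "q < 1" and aq: "(a + 1) * q = 1"
    and B: "B = (2 * (a + 1)) powr (a + 1)"
    and u: "u > 0" and eta: "0 < \<eta>" "\<eta> \<le> 1" and G: "0 \<le> G"
    and R: "B * u powr (-a) * G \<le> 2 * (a + 1) * \<eta> powr q \<or> u * G \<le> \<eta> powr (1 + q)"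
  shows "B * (a + 1) * u powr (-a-2) * \<eta>^2 + B * u powr (-a-1) * G
      \<le> (B * u powr (-a-1) * \<eta>) powr q * (1 + B * u powr (-a-1) * \<eta>)"
proof -
  have B0: "B > 0" using B a by simp
  have Bq: "B powr q = 2 * (a + 1)" using B a aq by (simp add: powr_powr)
  define cq where "cq = 2 * (a + 1) * u powr (-1) * \<eta> powr q"
  have cq: "(B * u powr (-a-1) * \<eta>) powr q = cq"
  proof -
    have "(B * u powr (-a-1) * \<eta>) powr q = B powr q * (u powr (-a-1)) powr q * \<eta> powr q"
      using B0 u eta by (simp add: powr_mult)
    also have "(u powr (-a-1)) powr q = u powr (-1)"
    proof -
      have "(-a-1) * q = -1" using aq by (simp add: algebra_simps)
      then show ?thesis by (simp only: powr_powr)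
    qed
    finally show ?thesis by (simp add: Bq cq_def)
  qed
  have upow: "u powr (-1) * u powr (-a-1) = u powr (-a-2)" "u powr (-1) * u powr (-a) = u powr (-a-1)"
     "u powr (-a-2) * u = u powr (-a-1)"
  proof -
    show "u powr (-1) * u powr (-a-1) = u powr (-a-2)" by (rule powr_add_eq) simp
    show "u powr (-1) * u powr (-a) = u powr (-a-1)" by (rule powr_add_eq) simp
    have "u powr (-a-2) * u powr 1 = u powr (-a-1)" by (rule powr_add_eq) simp
    then show "u powr (-a-2) * u = u powr (-a-1)" using u by simp
  qed
  have epow: "\<eta> powr q * \<eta> = \<eta> powr (1 + q)" using eta by (simp add: powr_add)
  have cqc0: "cq * (B * u powr (-a-1) * \<eta>) = 2 * (a + 1) * B * (u powr (-1) * u powr (-a-1)) * (\<eta> powr q * \<eta>)"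
    unfolding cq_def by (simp only: ac_simps)
  have cqc: "cq * (B * u powr (-a-1) * \<eta>) = 2 * (a + 1) * B * u powr (-a-2) * \<eta> powr (1 + q)"
    unfolding cqc0 upow(1) epow ..
  have e2: "\<eta>^2 \<le> \<eta> powr (1 + q)"
  proof -
    have "\<eta> powr 2 \<le> \<eta> powr (1 + q)" using eta q by (intro powr_mono') auto
    then show ?thesis using eta by (simp add: powr_numeral)
  qed
  have T1: "B * (a + 1) * u powr (-a-2) * \<eta>^2 \<le> (a + 1) * B * u powr (-a-2) * \<eta> powr (1 + q)"
    using e2 B0 a u by (simp add: mult.commute mult.left_commute mult_left_mono)
  show ?thesis
  proof (cases "B * u powr (-a) * G \<le> 2 * (a + 1) * \<eta> powr q")
    case True
    have "u powr (-1) * (B * u powr (-a) * G) = B * (u powr (-1) * u powr (-a)) * G"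
      by (simp only: ac_simps)
    then have "B * u powr (-a-1) * G = u powr (-1) * (B * u powr (-a) * G)"
      unfolding upow(2) by simp
    also have "\<dots> \<le> u powr (-1) * (2 * (a + 1) * \<eta> powr q)"
      using True by (intro mult_left_mono) auto
    also have "\<dots> = cq" by (simp add: cq_def)
    finally have T2: "B * u powr (-a-1) * G \<le> cq" .
    have "0 \<le> (a + 1) * B * u powr (-a-2) * \<eta> powr (1 + q)" using a B0 by simp
    then show ?thesis using T1 T2 cq cqc by (simp add: algebra_simps)
  next
    case False
    then have R2: "u * G \<le> \<eta> powr (1 + q)" using R by auto
    have "B * u powr (-a-2) * (u * G) = B * (u powr (-a-2) * u) * G"
      by (simp only: ac_simps)
    then have "B * u powr (-a-1) * G = B * u powr (-a-2) * (u * G)"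
      unfolding upow(3) by (simp only: eq_commute)
    also have "\<dots> \<le> B * u powr (-a-2) * \<eta> powr (1 + q)"
      using R2 B0 by (intro mult_left_mono) auto
    also have "\<dots> \<le> (a + 1) * B * u powr (-a-2) * \<eta> powr (1 + q)"
      using a B0 by (intro mult_right_mono) auto
    finally have T2: "B * u powr (-a-1) * G \<le> (a + 1) * B * u powr (-a-2) * \<eta> powr (1 + q)" .
    have "0 \<le> cq" using a by (simp add: cq_def)
    then show ?thesis using T1 T2 cq cqc by (simp add: algebra_simps)
  qed
qed


lemma powr_comp_deriv:
  assumes "(g has_real_derivative g') (at x)" "g x > 0"
  shows "((\<lambda>y. g y powr r) has_real_derivative r * g x powr (r - 1) * g') (at x)"
  using DERIV_chain2[OF has_real_derivative_powr[OF assms(2)] assms(1)] by simp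

lemma Fd_pos: "s > 0 \<Longrightarrow> Fd s > 0"
  by (auto simp: Fd_def intro!: mult_pos_pos add_pos_pos)

lemma FF_strict: assumes "0 < s" "s < t" shows "FF s < FF t"
  using assms(2) by (rule DERIV_pos_imp_increasing) (use assms FF_deriv Fd_pos in \<open>force\<close>)

lemma FF_le: "s > 0 \<Longrightarrow> FF s \<le> s"
  by (simp add: FF_pos mult_left_le)

lemma FF_nonneg: "0 \<le> FF s"
  by (cases "s > 0") (auto simp: FF_pos FF_nonpos)

lemma FF_lower: assumes "s > 0" shows "s - 1 \<le> FF s"
proof -
  have "1 - 1/s \<le> exp (-1/s)" using exp_ge_add_one_self[of "-1/s"] by simp
  then have "s * (1 - 1/s) \<le> s * exp (-1/s)" using assms by (intro mult_left_mono) auto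
  moreover have "s * (1 - 1/s) = s - 1" using assms by (simp add: field_simps)
  ultimately show ?thesis using assms by (simp add: FF_pos)
qed

lemma F2_bound:
  fixes e :: real assumes s: "s > 0" and e: "0 < e" "e < 1"
  shows "F2 s \<le> 27 / e^3 * Fd s powr (1 - e)"
proof -
  define x where "x = 1 / s"
  have x: "x > 0" using s by (simp add: x_def)
  have F2x: "F2 s = exp (-x) * x^3" using s by (simp add: F2_def x_def power_divide field_simps)
  have Fdx: "Fd s = exp (-x) * (1 + x)" using s by (simp add: Fd_def x_def)
  have "exp (-x) * x^3 = x^3 * exp (-e*x) * exp (-((1 - e) * x))"
    by (simp add: exp_add[symmetric] algebra_simps)
  also have "\<dots> \<le> 27 / e^3 * exp (-((1 - e) * x))"
    using cube_exp[of x e] x e by (intro mult_right_mono) auto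
  also have "\<dots> \<le> 27 / e^3 * (exp (-x) * (1 + x)) powr (1 - e)"
    using powr_exp_lower[of x "1 - e"] x e by (intro mult_left_mono) auto
  finally show ?thesis by (simp add: F2x Fdx)
qed

lemma partA:
  fixes m \<beta> :: real
  assumes m: "m > 2" and bb: "0 < \<beta>" "\<beta> < 1"
  shows "\<exists>(b::real). b > 0 \<and> (\<exists>(chi :: real \<Rightarrow> real).
            smooth_on {..<b} chi \<and>
            (\<forall>s\<le>0. chi s = 0) \<and>
            filterlim chi at_top (at_left b) \<and>
            (\<forall>s\<in>{0<..<b}.
               deriv chi s > 0 \<and> deriv (deriv chi) s \<ge> 0 \<and>
               (m - 2) / m *
                 (deriv (deriv chi) s /
                   ((1 + deriv chi s) powr m - (1 + deriv chi s)) powr (2 / m))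
                 powr (m / (m - 2))
               \<le> (deriv chi s) powr \<beta>))"
proof -
  define e where "e = (1 - \<beta>) * (1 - 2/m)"
  have m1: "0 < 1 - 2/m" "1 - 2/m < 1" using m by (auto simp: field_simps)
  have e0: "0 < e" using m1 bb unfolding e_def by (auto intro!: mult_pos_pos)
  have "e \<le> (1 - \<beta>) * 1" unfolding e_def using m1 bb by (intro mult_left_mono) auto
  then have e: "0 < e" "e < 1" using e0 bb by auto
  define q where "q = 1 - e"
  have qdef: "q = 2/m + \<beta> * (1 - 2/m)" using m by (simp add: q_def e_def field_simps)
  have q: "0 < q" "q < 1" using e by (auto simp: q_def)
  define a where "a = e / q"
  have a: "a > 0" using e q by (simp add: a_def)
  have aq: "(a + 1) * q = 1" using q by (simp add: a_def q_def field_simps)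
  define B where "B = (2 * (a + 1)) powr (a + 1)"
  have B0: "B > 0" using a by (simp add: B_def)
  define A where "A = B / a"
  define K0 where "K0 = 27 / e^3"
  have K0: "K0 > 0" using e by (simp add: K0_def)
  define T where "T = 4 * (a + 1) * K0 powr (1/a) + 8"
  have T8: "T \<ge> 8" using a K0 by (simp add: T_def)
  define b where "b = T + 1"
  have b0: "b > 0" using T8 by (simp add: b_def)
  define t0 where "t0 = FF b"
  have t0T: "T \<le> t0" using FF_lower[OF b0] by (simp add: t0_def b_def)
  have FFlt: "FF s < t0" if "s < b" for s
  proof (cases "s > 0")
    case True then show ?thesis using FF_strict[OF True that] by (simp add: t0_def)
  next
    case False then show ?thesis using T8 t0T FF_nonpos[of s] by simp
  qed
  define chi where "chi = (\<lambda>s. A * ((t0 - FF s) powr (-a) - t0 powr (-a)))"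
  define c1 where "c1 = (\<lambda>y. B * (t0 - FF y) powr (-a-1) * Fd y)"
  define X where "X = (\<lambda>y. B * (a + 1) * (t0 - FF y) powr (-a-2) * (Fd y)^2 + B * (t0 - FF y) powr (-a-1) * F2 y)"
  have chi_d: "(chi has_real_derivative c1 y) (at y)" if y: "y < b" for y
  proof -
    have g: "((\<lambda>s. t0 - FF s) has_real_derivative (0 - Fd y)) (at y)"
      by (intro derivative_intros FF_deriv)
    have "((\<lambda>s. (t0 - FF s) powr (-a)) has_real_derivative (-a) * (t0 - FF y) powr (-a - 1) * (0 - Fd y)) (at y)"
      using powr_comp_deriv[OF g, where r="-a"] FFlt[OF y] by simp
    from DERIV_cmult[OF DERIV_diff[OF this DERIV_const], of A "t0 powr (-a)"]
    have "(chi has_real_derivative A * ((-a) * (t0 - FF y) powr (-a - 1) * (0 - Fd y) - 0)) (at y)"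
      unfolding chi_def .
    moreover have "A * ((-a) * (t0 - FF y) powr (-a - 1) * (0 - Fd y) - 0) = c1 y"
      using a by (simp add: c1_def A_def)
    ultimately show ?thesis by simp
  qed
  have c1_d: "(c1 has_real_derivative X s) (at s)" if s: "0 < s" "s < b" for s
  proof -
    have g: "((\<lambda>s. t0 - FF s) has_real_derivative (0 - Fd s)) (at s)"
      by (intro derivative_intros FF_deriv)
    have p: "((\<lambda>y. (t0 - FF y) powr (-a-1)) has_real_derivative (-a-1) * (t0 - FF s) powr (-a - 1 - 1) * (0 - Fd s)) (at s)"
      using powr_comp_deriv[OF g, where r="-a-1"] FFlt[OF s(2)] by simp
    have "(c1 has_real_derivative (B * (t0 - FF s) powr (-a-1)) * F2 s
        + (B * ((-a-1) * (t0 - FF s) powr (-a - 1 - 1) * (0 - Fd s))) * Fd s) (at s)"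
      unfolding c1_def by (rule DERIV_mult'[OF DERIV_cmult[OF p] Fd_deriv[OF s(1)]])
    moreover have "(B * (t0 - FF s) powr (-a-1)) * F2 s
        + (B * ((-a-1) * (t0 - FF s) powr (-a - 1 - 1) * (0 - Fd s))) * Fd s = X s"
      by (simp add: X_def power2_eq_square algebra_simps)
    ultimately show ?thesis by simp
  qed
  have smooth: "smooth_on {..<b} chi"
  proof (rule smooth_from_Ck)
    show "\<forall>k. Ck k {..<b} chi"
    proof
      fix k
      have "Ck k {..<b} (\<lambda>s. t0 - FF s)" by (intro Ck_diff Ck_const Ck_FF)
      moreover have "(\<lambda>s. t0 - FF s) ` {..<b} \<subseteq> {0<..}" using FFlt by auto
      ultimately have "Ck k {..<b} (\<lambda>s. (t0 - FF s) powr (-a))"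
        by (intro Ck_compose[OF Ck_powr]) auto
      then have "Ck k {..<b} (\<lambda>s. A * ((t0 - FF s) powr (-a) - t0 powr (-a)))"
        by (intro Ck_mult Ck_const Ck_diff)
      then show "Ck k {..<b} chi" by (simp add: chi_def)
    qed
  qed simp
  have neg: "\<forall>s\<le>0. chi s = 0" by (simp add: chi_def FF_nonpos)
  have lim: "filterlim chi at_top (at_left b)"
  proof -
    have cont: "((\<lambda>s. t0 - FF s) \<longlongrightarrow> 0) (at_left b)"
    proof -
      have "isCont FF b" using FF_deriv DERIV_isCont by blast
      then have "(FF \<longlongrightarrow> t0) (at_left b)" unfolding t0_def
        by (simp add: isCont_def filterlim_at_split)
      then have "((\<lambda>s. t0 - FF s) \<longlongrightarrow> t0 - t0) (at_left b)" by (intro tendsto_intros)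
      then show ?thesis by simp
    qed
    have ev: "\<forall>\<^sub>F s in at_left b. t0 - FF s \<in> {0<..}"
      using eventually_at_left_real[OF b0] by (rule eventually_mono) (use FFlt in auto)
    have f1: "filterlim (\<lambda>s. t0 - FF s) (at_right 0) (at_left b)"
      using cont ev by (auto simp: filterlim_at eventually_mono)
    have f2: "filterlim (\<lambda>u. u powr (-a)) at_top (at_right 0)" using a by real_asymp
    have f3: "filterlim (\<lambda>s. (t0 - FF s) powr (-a)) at_top (at_left b)"
      using filterlim_compose[OF f2 f1] by simp
    have f4: "filterlim (\<lambda>s. (- (t0 powr (-a))) + (t0 - FF s) powr (-a)) at_top (at_left b)"
      by (rule filterlim_tendsto_add_at_top[OF tendsto_const f3])
    have "filterlim (\<lambda>s. A * ((- (t0 powr (-a))) + (t0 - FF s) powr (-a))) at_top (at_left b)"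
      using a B0 by (intro filterlim_tendsto_pos_mult_at_top[OF tendsto_const _ f4]) (simp add: A_def)
    then show ?thesis by (simp add: chi_def)
  qed
  have main: "deriv chi s > 0 \<and> deriv (deriv chi) s \<ge> 0 \<and>
               (m - 2) / m *
                 (deriv (deriv chi) s /
                   ((1 + deriv chi s) powr m - (1 + deriv chi s)) powr (2 / m))
                 powr (m / (m - 2))
               \<le> (deriv chi s) powr \<beta>" if s: "0 < s" "s < b" for s
  proof -
    have dd: "deriv chi s = c1 s" "deriv (deriv chi) s = X s"
      using deriv2_open[of "{..<b}" s chi c1, OF _ _ chi_d c1_d[OF s]] s by auto
    define u where "u = t0 - FF s"
    have u: "u > 0" using FFlt[OF s(2)] by (simp add: u_def)
    define \<eta> where "\<eta> = Fd s"
    have eta: "0 < \<eta>" "\<eta> \<le> 1"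
      using s Fd_bounds[of "1/s"] by (auto simp: \<eta>_def Fd_def)
    have G: "0 \<le> F2 s" using s by (simp add: F2_def)
    have F2b: "F2 s \<le> K0 * \<eta> powr q" using F2_bound[OF s(1) e] by (simp add: K0_def \<eta>_def q_def)
    have R: "B * u powr (-a) * F2 s \<le> 2 * (a + 1) * \<eta> powr q \<or> u * F2 s \<le> \<eta> powr (1 + q)"
    proof (cases "u \<ge> t0 / 2")
      case True
      have "2 * (a + 1) * K0 powr (1/a) \<le> u" using True t0T K0 a
        by (simp add: T_def algebra_simps)
      then have "2 * (a + 1) / u \<le> K0 powr (-(1/a))" using u K0
        by (simp add: powr_minus field_simps)
      then have "(2 * (a + 1) / u) powr a \<le> (K0 powr (-(1/a))) powr a"
        using a u by (intro powr_mono2) auto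
      also have "\<dots> = 1 / K0"
      proof -
        have "-(1/a) * a = -1" using a by simp
        then have "(K0 powr (-(1/a))) powr a = K0 powr (-1)" by (simp only: powr_powr)
        then show ?thesis using K0 by (simp add: powr_minus divide_inverse)
      qed
      finally have k: "(2 * (a + 1) / u) powr a * K0 \<le> 1" using K0 by (simp add: field_simps)
      have Bsplit: "B = 2 * (a + 1) * (2 * (a + 1)) powr a"
        using a by (simp add: B_def powr_add)
      have "B * u powr (-a) * F2 s \<le> B * u powr (-a) * (K0 * \<eta> powr q)"
        using F2b B0 by (intro mult_left_mono) auto
      also have "\<dots> = 2 * (a + 1) * ((2 * (a + 1) / u) powr a * K0) * \<eta> powr q"
        using u a by (simp add: Bsplit powr_divide powr_minus divide_inverse powr_mult inverse_powr)
      also have "\<dots> \<le> 2 * (a + 1) * 1 * \<eta> powr q"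
        using k a by (intro mult_right_mono mult_left_mono) auto
      finally show ?thesis by simp
    next
      case False
      have FFs: "t0 / 2 < FF s" using False by (simp add: u_def)
      have s4: "4 \<le> s" using FFs FF_le[OF s(1)] T8 t0T by linarith
      have "u * F2 s \<le> t0 * (1 / s^3)"
      proof (intro mult_mono)
        show "u \<le> t0" using FF_nonneg[of s] by (simp add: u_def)
        show "F2 s \<le> 1 / s^3" using s by (simp add: F2_def divide_right_mono)
      qed (use u G T8 t0T in auto)
      also have "\<dots> \<le> 2 * s * (1 / s^3)"
        using FFs FF_le[OF s(1)] s by (intro mult_right_mono) auto
      also have "\<dots> = 2 / s^2" using s by (simp add: power2_eq_square power3_eq_cube)
      also have "\<dots> \<le> 1/2"
      proof -
        have "4 * 4 \<le> s * s" using s4 by (intro mult_mono) auto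
        then have "16 \<le> s^2" by (simp add: power2_eq_square)
        then show ?thesis using s by (simp add: field_simps)
      qed
      also have "\<dots> \<le> \<eta> powr (1 + q)"
      proof -
        have "3/4 \<le> \<eta>"
        proof -
          have "1 - 1/s \<le> exp (-1/s)" using exp_ge_add_one_self[of "-1/s"] by simp
          moreover have "1/s \<le> 1/4" using s4 by (simp add: field_simps)
          moreover have "exp (-1/s) \<le> \<eta>" using s by (simp add: \<eta>_def Fd_def)
          ultimately show ?thesis by linarith
        qed
        then have "(3/4)^2 \<le> \<eta>^2" by (intro power_mono) auto
        then have h1: "9/16 \<le> \<eta>^2" by (simp add: power2_eq_square)
        have "\<eta> powr 2 \<le> \<eta> powr (1 + q)" using eta q by (intro powr_mono') auto
        then have h2: "\<eta>^2 \<le> \<eta> powr (1 + q)" using eta by (simp add: powr_numeral)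
        show ?thesis using h1 h2 by linarith
      qed
      finally show ?thesis by simp
    qed
    have core: "X s \<le> c1 s powr q * (1 + c1 s)"
      using A_core[OF a q aq B_def u eta G R] by (simp add: X_def c1_def u_def \<eta>_def)
    have c1pos: "c1 s > 0" using B0 u eta by (simp add: c1_def u_def \<eta>_def)
    have X0: "X s \<ge> 0" using B0 u eta G a by (simp add: X_def u_def \<eta>_def)
    have red: "(m - 2) / m * (X s / ((1 + c1 s) powr m - (1 + c1 s)) powr (2 / m)) powr (m / (m - 2))
         \<le> c1 s powr \<beta>"
      using A_red[OF m c1pos X0] core qdef by simp
    show ?thesis using red c1pos X0 dd by simp
  qed
  show ?thesis
    by (rule exI[of _ b], rule conjI[OF b0], rule exI[of _ chi]) (use smooth neg lim main in auto)
qed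


theorem proposition3p6:
  fixes m \<beta> :: real
  assumes "m > 2" and "0 < \<beta>" and "\<beta> < 1"
  shows "(\<exists>(b::real). b > 0 \<and> (\<exists>(chi :: real \<Rightarrow> real).
            smooth_on {..<b} chi \<and>
            (\<forall>s\<le>0. chi s = 0) \<and>
            filterlim chi at_top (at_left b) \<and>
            (\<forall>s\<in>{0<..<b}.
               deriv chi s > 0 \<and> deriv (deriv chi) s \<ge> 0 \<and>
               (m - 2) / m *
                 (deriv (deriv chi) s /
                   ((1 + deriv chi s) powr m - (1 + deriv chi s)) powr (2 / m))
                 powr (m / (m - 2))
               \<le> (deriv chi s) powr \<beta>)))
       \<and>
       (\<exists>(xi :: real \<Rightarrow> real) (M::real).
            smooth_on UNIV xi \<and>
            (\<forall>s\<le>0. xi s = s) \<and>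
            mono xi \<and> M > 0 \<and> (xi \<longlongrightarrow> M) at_top \<and>
            (\<forall>s>0.
               0 < deriv xi s \<and> deriv xi s < 1 \<and> deriv (deriv xi) s \<le> 0 \<and>
               (m - 2) / m *
                 (- deriv (deriv xi) s /
                   (deriv xi s - (deriv xi s) powr m) powr (2 / m))
                 powr (m / (m - 2))
               \<le> (1 - deriv xi s) powr \<beta>))"
  using partA[OF assms] partB[OF assms] by blast

end
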